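(* Let $b_1,\dots,b_N\in(0,1)$ and $c_1,c_2>0$ with $b_ib_j<1$, $b_ic_1<1$, $b_ic_2<1$ for all $i,j$. Then $\mathbb E^{\boldsymbol b,\boldsymbol b}_{\mathrm{GRW}}\big[V(\mathbf L)\big]<\infty$, where $V(\mathbf L)=(c_1c_2)^{\max_{1\le j\le N}(L_2(j)-L_1(j-1))}c_2^{L_1(N)-L_2(N)}$.
   Context: Under $\mathbb P^{\boldsymbol b,\boldsymbol b}_{\mathrm{GRW}}$, $\mathbf L_1=(L_1(j))_{0\le j\le N}$ and $\mathbf L_2=(L_2(j))_{0\le j\le N}$ are independent random walks with $L_1(0)=L_2(0)=0$ and independent increments $L_i(j)-L_i(j-1)\sim\mathrm{Geom}(b_j)$, where $\mathbb P(\mathrm{Geom}(q)=n)=(1-q)q^n$, $n\in\mathbb Z_{\ge0}$; $\mathbf L=(\mathbf L_1,\mathbf L_2)$. *)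

theory Defs
  imports "HOL-Probability.Probability"
begin

text \<open>Geom(q): P(n) = (1-q) q^n, i.e. the library's geometric_pmf with success probability 1 - q.\<close>
definition Geom :: "real \<Rightarrow> nat pmf" where
  "Geom q = geometric_pmf (1 - q)"

definition GRW_incr :: "nat \<Rightarrow> (nat \<Rightarrow> real) \<Rightarrow> (nat \<Rightarrow> nat) pmf" where
  "GRW_incr N b = Pi_pmf {1..N} 0 (\<lambda>j. Geom (b j))"

definition GRW :: "nat \<Rightarrow> (nat \<Rightarrow> real) \<Rightarrow> ((nat \<Rightarrow> nat) \<times> (nat \<Rightarrow> nat)) pmf" where
  "GRW N b = pair_pmf (GRW_incr N b) (GRW_incr N b)"

definition walk :: "(nat \<Rightarrow> nat) \<Rightarrow> nat \<Rightarrow> int" where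
  "walk X j = int (\<Sum>i=1..j. X i)"

definition Vfun :: "nat \<Rightarrow> real \<Rightarrow> real \<Rightarrow> (nat \<Rightarrow> int) \<Rightarrow> (nat \<Rightarrow> int) \<Rightarrow> real" where
  "Vfun N c1 c2 L1 L2 =
     (c1 * c2) powi (MAX j\<in>{1..N}. L2 j - L1 (j - 1)) * c2 powi (L1 N - L2 N)"

end

theory Submission
  imports Defs
begin

lemma geom_fin:
  fixes b M :: real
  assumes "0 < b" "b < 1" "0 < M" "b * M < 1"
  shows "(\<integral>\<^sup>+ n. ennreal (M ^ n) \<partial>measure_pmf (Geom b)) < \<infinity>"
proof -
  have "(\<integral>\<^sup>+ n. ennreal (M ^ n) \<partial>measure_pmf (Geom b))
      = (\<integral>\<^sup>+ n. ennreal ((1 - b) * (b * M) ^ n) \<partial>count_space UNIV)"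
    unfolding nn_integral_measure_pmf Geom_def using assms
    by (intro nn_integral_cong) (simp add: ennreal_mult'[symmetric] power_mult_distrib mult_ac)
  also have "\<dots> = (\<Sum>n. ennreal ((1 - b) * (b * M) ^ n))"
    by (rule nn_integral_count_space_nat)
  also have "\<dots> = ennreal ((1 - b) * (1 / (1 - b * M)))"
    using assms by (intro suminf_ennreal_eq sums_mult geometric_sums) auto
  finally show ?thesis by simp
qed

lemma powi_bound:
  fixes c :: real and e n :: int
  assumes "c > 0" "0 \<le> e" "e \<le> n"
  shows "c powi e \<le> max 1 c ^ nat n"
proof -
  have "c powi e = c ^ nat e" using assms
    by (metis nat_0_le power_int_of_nat)
  also have "\<dots> \<le> max 1 c ^ nat e" using assms by (intro power_mono) auto
  also have "\<dots> \<le> max 1 c ^ nat n" using assms by (intro power_increasing) auto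
  finally show ?thesis .
qed

lemma walk_mono: "i \<le> j \<Longrightarrow> walk X i \<le> walk X j"
  unfolding walk_def by (auto intro!: sum_mono2)

lemma walk_0: "walk X 0 = 0" unfolding walk_def by simp

lemma walk_nonneg: "walk X j \<ge> 0" unfolding walk_def by (simp add: sum_nonneg)

lemma pointwise:
  fixes c1 c2 :: real
  assumes "N \<ge> 1" "c1 > 0" "c2 > 0"
  shows "Vfun N c1 c2 (walk X) (walk Y) \<le>
     (\<Prod>i\<in>{1..N}. max 1 c2 ^ X i) * (\<Prod>i\<in>{1..N}. max 1 c1 ^ Y i)"
proof -
  define m where "m = (MAX j\<in>{1..N}. walk Y j - walk X (j - 1))"
  have fin: "finite ((\<lambda>j. walk Y j - walk X (j - 1)) ` {1..N})" by simp
  have m1: "m \<ge> walk Y 1 - walk X 0" unfolding m_def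
    using assms by (intro Max_ge[OF fin]) force
  have mN: "m \<ge> walk Y N - walk X (N - 1)" unfolding m_def
    using assms by (intro Max_ge[OF fin]) auto
  have "m \<in> (\<lambda>j. walk Y j - walk X (j - 1)) ` {1..N}" unfolding m_def
    using assms by (intro Max_in[OF fin]) auto
  then obtain j where j: "j \<in> {1..N}" "m = walk Y j - walk X (j - 1)" by auto
  have mle: "m \<le> walk Y N" using j walk_mono[of j N Y] walk_nonneg[of X "j - 1"] by auto
  have m0: "0 \<le> m" using m1 walk_0[of X] walk_nonneg[of Y 1] by simp
  have xn: "walk X (N - 1) \<le> walk X N" by (rule walk_mono) auto
  have "Vfun N c1 c2 (walk X) (walk Y) = c1 powi m * c2 powi (m + (walk X N - walk Y N))"
    unfolding Vfun_def m_def[symmetric] using assms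
    by (simp add: power_int_mult_distrib power_int_add)
  also have "\<dots> \<le> max 1 c1 ^ nat (walk Y N) * max 1 c2 ^ nat (walk X N)"
    using assms m0 mle mN xn walk_nonneg[of Y N]
    by (intro mult_mono powi_bound) auto
  also have "\<dots> = (\<Prod>i\<in>{1..N}. max 1 c2 ^ X i) * (\<Prod>i\<in>{1..N}. max 1 c1 ^ Y i)"
    unfolding walk_def nat_int power_sum by (simp add: mult.commute)
  finally show ?thesis .
qed

theorem proposition2p18:
  fixes N :: nat and b :: "nat \<Rightarrow> real" and c1 c2 :: real
  assumes "N \<ge> 1"
    and "\<forall>j\<in>{1..N}. 0 < b j \<and> b j < 1"
    and "c1 > 0" and "c2 > 0"
    and "\<forall>i\<in>{1..N}. \<forall>j\<in>{1..N}. b i * b j < 1"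
    and "\<forall>i\<in>{1..N}. b i * c1 < 1"
    and "\<forall>i\<in>{1..N}. b i * c2 < 1"
  shows "(\<integral>\<^sup>+ XY. ennreal (Vfun N c1 c2 (walk (fst XY)) (walk (snd XY))) \<partial>measure_pmf (GRW N b)) < \<infinity>"
proof -
  define M1 where "M1 = max 1 c1"
  define M2 where "M2 = max 1 c2"
  have fin: "(\<integral>\<^sup>+ X. (\<Prod>i\<in>{1..N}. ennreal (M ^ X i)) \<partial>measure_pmf (GRW_incr N b)) < \<infinity>"
    if hM: "M = M1 \<or> M = M2" for M
  proof -
    have "(\<integral>\<^sup>+ X. (\<Prod>i\<in>{1..N}. ennreal (M ^ X i)) \<partial>measure_pmf (GRW_incr N b))
        = (\<Prod>i\<in>{1..N}. \<integral>\<^sup>+ n. ennreal (M ^ n) \<partial>measure_pmf (Geom (b i)))"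
      unfolding GRW_incr_def by (rule nn_integral_prod_Pi_pmf) simp
    also have "\<dots> < \<infinity>"
    proof -
      have "(\<integral>\<^sup>+ n. ennreal (M ^ n) \<partial>measure_pmf (Geom (b i))) < \<infinity>" if i: "i \<in> {1..N}" for i
      proof -
      have bm: "b i * max 1 c < 1" if "b i < 1" "b i * c < 1" for c
        using that by (simp add: max_def)
      have "b i * M < 1" using hM i assms(2,6,7) bm unfolding M1_def M2_def
        by auto
      then show "(\<integral>\<^sup>+ n. ennreal (M ^ n) \<partial>measure_pmf (Geom (b i))) < \<infinity>"
        using i assms(2) hM unfolding M1_def M2_def by (intro geom_fin) auto
      qed
      then show ?thesis by (auto simp: less_top[symmetric] ennreal_prod_eq_top)
    qed
    finally show ?thesis .
  qed
  have "(\<integral>\<^sup>+ XY. ennreal (Vfun N c1 c2 (walk (fst XY)) (walk (snd XY))) \<partial>measure_pmf (GRW N b))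
     \<le> (\<integral>\<^sup>+ XY. (\<Prod>i\<in>{1..N}. ennreal (M2 ^ fst XY i)) * (\<Prod>i\<in>{1..N}. ennreal (M1 ^ snd XY i)) \<partial>measure_pmf (GRW N b))"
  proof (intro nn_integral_mono)
    fix XY :: "(nat \<Rightarrow> nat) \<times> (nat \<Rightarrow> nat)"
    have "ennreal (Vfun N c1 c2 (walk (fst XY)) (walk (snd XY)))
       \<le> ennreal ((\<Prod>i\<in>{1..N}. M2 ^ fst XY i) * (\<Prod>i\<in>{1..N}. M1 ^ snd XY i))"
      unfolding M1_def M2_def using assms by (intro ennreal_leI pointwise) auto
    also have "\<dots> = (\<Prod>i\<in>{1..N}. ennreal (M2 ^ fst XY i)) * (\<Prod>i\<in>{1..N}. ennreal (M1 ^ snd XY i))"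
      unfolding M1_def M2_def by (simp add: ennreal_mult' prod_nonneg prod_ennreal)
    finally show "ennreal (Vfun N c1 c2 (walk (fst XY)) (walk (snd XY)))
       \<le> (\<Prod>i\<in>{1..N}. ennreal (M2 ^ fst XY i)) * (\<Prod>i\<in>{1..N}. ennreal (M1 ^ snd XY i))" .
  qed
  also have "\<dots> = (\<integral>\<^sup>+ X. (\<Prod>i\<in>{1..N}. ennreal (M2 ^ X i)) \<partial>measure_pmf (GRW_incr N b)) *
                  (\<integral>\<^sup>+ Y. (\<Prod>i\<in>{1..N}. ennreal (M1 ^ Y i)) \<partial>measure_pmf (GRW_incr N b))"
    unfolding GRW_def nn_integral_pair_pmf' by (simp add: nn_integral_cmult nn_integral_multc)
  also have "\<dots> < \<infinity>" using fin[of M1] fin[of M2] by (simp add: ennreal_mult_less_top)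
  finally show ?thesis .
qed

end
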